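(* Hadamard graphs are not distance magic; i.e., no Hadamard graph admits a distance magic labeling.
   Context: For a Hadamard matrix $H=(h_{ij})$ of order $m$ (an $m\times m$ matrix with entries $\pm1$ and $HH^T=mI$), the Hadamard graph has $4m$ vertices $r_i^{+},r_i^{-},c_j^{+},c_j^{-}$ ($1\le i,j\le m$), where $r_i^{+}\sim c_j^{+}$ and $r_i^{-}\sim c_j^{-}$ if $h_{ij}=1$, and $r_i^{+}\sim c_j^{-}$ and $r_i^{-}\sim c_j^{+}$ if $h_{ij}=-1$. A distance magic labeling of a graph $G$ of order $N$ is a bijection $f:V(G)\to\{1,\dots,N\}$ such that $\sum_{y\in N(x)}f(y)$ is the same for every vertex $x$, where $N(x)$ is the open neighborhood of $x$. *)

theory Defs
  imports Main
begin

definition hadamard_matrix :: "nat \<Rightarrow> (nat \<Rightarrow> nat \<Rightarrow> int) \<Rightarrow> bool" where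
  "hadamard_matrix m H \<longleftrightarrow>
     (\<forall>i<m. \<forall>j<m. H i j = 1 \<or> H i j = -1) \<and>
     (\<forall>i<m. \<forall>k<m. (\<Sum>j<m. H i j * H k j) = (if i = k then int m else 0))"

text \<open>Vertices of the Hadamard graph: (is_row, sign, index);
  (True, True, i) = r_i^+, (True, False, i) = r_i^-,
  (False, True, j) = c_j^+, (False, False, j) = c_j^-.\<close>
type_synonym hvert = "bool \<times> bool \<times> nat"

definition hadamard_vertices :: "nat \<Rightarrow> hvert set" where
  "hadamard_vertices m = UNIV \<times> UNIV \<times> {..<m}"

text \<open>r_i^s ~ c_j^t iff (s = t and h_ij = 1) or (s \<noteq> t and h_ij = -1); symmetric.\<close>
definition hadamard_adj :: "nat \<Rightarrow> (nat \<Rightarrow> nat \<Rightarrow> int) \<Rightarrow> hvert \<Rightarrow> hvert \<Rightarrow> bool" where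
  "hadamard_adj m H x y \<longleftrightarrow>
     x \<in> hadamard_vertices m \<and> y \<in> hadamard_vertices m \<and>
     (case (x, y) of ((rx, sx, a), (ry, sy, b)) \<Rightarrow>
        rx \<noteq> ry \<and>
        (let i = (if rx then a else b); j = (if rx then b else a) in
          (sx = sy \<and> H i j = 1) \<or> (sx \<noteq> sy \<and> H i j = -1)))"

definition distance_magic_labeling :: "'a set \<Rightarrow> ('a \<Rightarrow> 'a \<Rightarrow> bool) \<Rightarrow> ('a \<Rightarrow> nat) \<Rightarrow> bool" where
  "distance_magic_labeling V E f \<longleftrightarrow>
     bij_betw f V {1..card V} \<and>
     (\<exists>k. \<forall>x\<in>V. (\<Sum>y\<in>{y\<in>V. E x y}. f y) = k)"

definition distance_magic :: "'a set \<Rightarrow> ('a \<Rightarrow> 'a \<Rightarrow> bool) \<Rightarrow> bool" where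
  "distance_magic V E \<longleftrightarrow> (\<exists>f. distance_magic_labeling V E f)"

end

theory Submission
  imports Defs
begin

lemma nbr:
  assumes "j < m" "hadamard_matrix m H"
  shows "{y \<in> hadamard_vertices m. hadamard_adj m H (False,s,j) y}
        = (\<lambda>i. (True, (s = (H i j = 1)), i)) ` {..<m}"
proof -
  have pm: "\<And>i. i < m \<Longrightarrow> H i j = 1 \<or> H i j = -1"
    using assms unfolding hadamard_matrix_def by blast
  show ?thesis
  proof (rule set_eqI, rule iffI)
    fix y assume "y \<in> {y \<in> hadamard_vertices m. hadamard_adj m H (False,s,j) y}"
    then obtain ry sy i where y: "y = (ry,sy,i)" "i < m" "ry"
      "(s = sy \<and> H i j = 1) \<or> (s \<noteq> sy \<and> H i j = -1)"
      by (cases y) (auto simp: hadamard_adj_def hadamard_vertices_def)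
    then show "y \<in> (\<lambda>i. (True, (s = (H i j = 1)), i)) ` {..<m}"
      by (auto intro!: image_eqI[where x=i])
  next
    fix y assume "y \<in> (\<lambda>i. (True, (s = (H i j = 1)), i)) ` {..<m}"
    then obtain i where i: "i < m" "y = (True, (s = (H i j = 1)), i)" by auto
    then show "y \<in> {y \<in> hadamard_vertices m. hadamard_adj m H (False,s,j) y}"
      using pm[OF i(1)] assms(1)
      by (auto simp: hadamard_adj_def hadamard_vertices_def)
  qed
qed

lemma nbr_sum:
  assumes "j < m" "hadamard_matrix m H"
  shows "(\<Sum>y\<in>{y \<in> hadamard_vertices m. hadamard_adj m H (False,s,j) y}. f y)
        = (\<Sum>i<m. f (True, (s = (H i j = 1)), i))"
  unfolding nbr[OF assms]
  by (subst sum.reindex) (auto simp: inj_on_def)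

theorem corollary2p8:
  fixes m :: nat and H :: "nat \<Rightarrow> nat \<Rightarrow> int"
  assumes "m \<ge> 1" and "hadamard_matrix m H"
  shows "\<not> distance_magic (hadamard_vertices m) (hadamard_adj m H)"
proof
  assume "distance_magic (hadamard_vertices m) (hadamard_adj m H)"
  then obtain f k where bij: "bij_betw f (hadamard_vertices m) {1..card (hadamard_vertices m)}"
    and mag: "\<And>x. x \<in> hadamard_vertices m \<Longrightarrow>
        (\<Sum>y\<in>{y\<in>hadamard_vertices m. hadamard_adj m H x y}. f y) = k"
    unfolding distance_magic_def distance_magic_labeling_def by blast
  have pm: "\<And>i j. i < m \<Longrightarrow> j < m \<Longrightarrow> H i j = 1 \<or> H i j = -1"
    using assms unfolding hadamard_matrix_def by blast
  have orth: "\<And>i k. i < m \<Longrightarrow> k < m \<Longrightarrow> (\<Sum>j<m. H i j * H k j) = (if i = k then int m else 0)"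
    using assms unfolding hadamard_matrix_def by blast
  define d where "d i = int (f (True,True,i)) - int (f (True,False,i))" for i
  have col: "(\<Sum>i<m. H i j * d i) = 0" if j: "j < m" for j
  proof -
    have "(\<Sum>i<m. f (True, (True = (H i j = 1)), i)) = k"
      using mag[of "(False,True,j)"] nbr_sum[OF j assms(2), where s=True and f=f] j
      by (simp add: hadamard_vertices_def)
    moreover have "(\<Sum>i<m. f (True, (False = (H i j = 1)), i)) = k"
      using mag[of "(False,False,j)"] nbr_sum[OF j assms(2), where s=False and f=f] j
      by (simp add: hadamard_vertices_def)
    ultimately have "(\<Sum>i<m. int (f (True, (True = (H i j = 1)), i)))
        - (\<Sum>i<m. int (f (True, (False = (H i j = 1)), i))) = 0"
      by (simp only: of_nat_sum[symmetric])
    also have "(\<Sum>i<m. int (f (True, (True = (H i j = 1)), i)))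
        - (\<Sum>i<m. int (f (True, (False = (H i j = 1)), i)))
        = (\<Sum>i<m. int (f (True, (True = (H i j = 1)), i)) - int (f (True, (False = (H i j = 1)), i)))"
      by (simp add: sum_subtractf)
    also have "\<dots> = (\<Sum>i<m. H i j * d i)"
    proof (rule sum.cong[OF refl])
      fix i assume "i \<in> {..<m}"
      then have "H i j = 1 \<or> H i j = -1" using pm j by auto
      then show "int (f (True, (True = (H i j = 1)), i)) - int (f (True, (False = (H i j = 1)), i)) = H i j * d i"
        by (auto simp: d_def)
    qed
    finally show ?thesis .
  qed
  have d0: "d i0 = 0" if i0: "i0 < m" for i0
  proof -
    have "0 = (\<Sum>j<m. H i0 j * (\<Sum>i<m. H i j * d i))"
      using col by simp
    also have "\<dots> = (\<Sum>i<m. d i * (\<Sum>j<m. H i0 j * H i j))"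
    proof -
      have "(\<Sum>j<m. H i0 j * (\<Sum>i<m. H i j * d i)) = (\<Sum>j<m. \<Sum>i<m. d i * (H i0 j * H i j))"
        by (simp add: sum_distrib_left mult_ac)
      also have "\<dots> = (\<Sum>i<m. \<Sum>j<m. d i * (H i0 j * H i j))"
        by (rule sum.swap)
      also have "\<dots> = (\<Sum>i<m. d i * (\<Sum>j<m. H i0 j * H i j))"
        by (simp add: sum_distrib_left)
      finally show ?thesis .
    qed
    also have "\<dots> = (\<Sum>i<m. if i = i0 then d i * int m else 0)"
      by (rule sum.cong[OF refl]) (auto simp: orth i0)
    also have "\<dots> = d i0 * int m" using i0 by simp
    finally show ?thesis using assms(1) by simp
  qed
  have "f (True,True,0) = f (True,False,0)"
    using d0[of 0] assms(1) by (simp add: d_def)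
  moreover have "inj_on f (hadamard_vertices m)" using bij bij_betw_imp_inj_on by blast
  moreover have "(True,True,0) \<in> hadamard_vertices m" "(True,False,0) \<in> hadamard_vertices m"
    using assms(1) by (auto simp: hadamard_vertices_def)
  ultimately have "(True,True,0::nat) = (True,False,0)" by (meson inj_onD)
  then show False by simp
qed

end
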